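(* Let $\pi$ be a uniformly random permutation of $\{1,\dots,m\}$, viewed as an instance of the fully labeled one-dimensional rearrangement problem (LOR). Let $D_S(\pi)$ be the end-effector travel of the plan produced by SweepCyclesLOR, and let $D^*(\pi)$ be the minimum end-effector travel over all valid plans for $\pi$ that use the minimum possible number of pick-n-swaps. Then SweepCyclesLOR minimizes the number of pick-n-swaps and its travel is optimal in the asymptotic sense in expectation: $\mathbb E[D_S(\pi)]/\mathbb E[D^*(\pi)]\to 1$ as $m\to\infty$.
   Context: Setting (LOR). A row of $m$ cells $1,\dots,m$, cell $i$ located at the point $i$ on the real line. Each cell initially holds exactly one item; items carry distinct labels $1,\dots,m$. An instance is a permutation $\pi$ of $\{1,\dots,m\}$, where $\pi_i$ is the label of the item initially in cell $i$; the goal is that item $i$ ends in cell $i$ for every $i$. A robot end-effector can hold at most one item; it starts at the rest position $p_0=$ cell $1$ holding nothing. A pick-n-swap operation performed at a cell $p$ is: if the end-effector holds nothing, pick up the item in $p$; if it holds an item and $p$ contains an item, exchange the two; if it holds an item and $p$ is empty, put the held item into $p$. A plan is a sequence $P=(p_0,p_1,\dots,p_N)$ of cells: the end-effector travels from $p_0$ to $p_1$, performs a pick-n-swap there, travels to $p_2$, and so on, and finally returns to $p_{N+1}:=p_0$. It is valid if at the end every item $i$ is in cell $i$ and the end-effector holds nothing. $N$ is the number of pick-n-swaps and the end-effector travel is $D(P)=\sum_{i=0}^{N}|p_i-p_{i+1}|$. SweepCyclesLOR: while some cell $i$ holds an item with label $\ne i$, let $i$ be the smallest such cell; go to $i$ and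 pick up its item, say with label $g$; while $g\neq i$, go to cell $g$ and swap (item $g$ is placed in cell $g$ and the item previously in cell $g$, with label $g'$, becomes held; set $g:=g'$); finally go to cell $i$ and place the held item. When no misplaced item remains, return to cell $1$. *)

theory Defs
  imports Complex_Main "HOL-Combinatorics.Permutations"
begin

text \<open>A state: contents of cells (None = empty) and the item held by the end-effector.\<close>
type_synonym lor_state = "(nat \<Rightarrow> nat option) \<times> nat option"

text \<open>Pick-n-swap at cell p. In all three cases of the paper (pick, exchange, place)
  the effect is: the cell receives what was held, and the end-effector receives
  what was in the cell.\<close>
definition pick_n_swap :: "nat \<Rightarrow> lor_state \<Rightarrow> lor_state" where
  "pick_n_swap p s = ((fst s)(p := snd s), fst s p)"

fun exec_plan :: "nat list \<Rightarrow> lor_state \<Rightarrow> lor_state" where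
  "exec_plan [] s = s"
| "exec_plan (p # ps) s = exec_plan ps (pick_n_swap p s)"

definition init_state :: "nat \<Rightarrow> (nat \<Rightarrow> nat) \<Rightarrow> lor_state" where
  "init_state m \<pi> = ((\<lambda>i. if i \<in> {1..m} then Some (\<pi> i) else None), None)"

definition goal_state :: "nat \<Rightarrow> lor_state" where
  "goal_state m = ((\<lambda>i. if i \<in> {1..m} then Some i else None), None)"

text \<open>A plan is the list (p_1,...,p_N) of pick-n-swap cells; p_0 = 1 is implicit.\<close>
definition valid_plan :: "nat \<Rightarrow> (nat \<Rightarrow> nat) \<Rightarrow> nat list \<Rightarrow> bool" where
  "valid_plan m \<pi> ps \<longleftrightarrow> set ps \<subseteq> {1..m} \<and> exec_plan ps (init_state m \<pi>) = goal_state m"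

definition cell_dist :: "nat \<Rightarrow> nat \<Rightarrow> nat" where
  "cell_dist a b = (if a \<le> b then b - a else a - b)"

fun travel_from :: "nat \<Rightarrow> nat list \<Rightarrow> nat" where
  "travel_from p [] = cell_dist p 1"
| "travel_from p (q # qs) = cell_dist p q + travel_from q qs"

definition travel :: "nat list \<Rightarrow> nat" where
  "travel ps = travel_from 1 ps"

definition min_swaps :: "nat \<Rightarrow> (nat \<Rightarrow> nat) \<Rightarrow> nat" where
  "min_swaps m \<pi> = (LEAST n. \<exists>ps. valid_plan m \<pi> ps \<and> length ps = n)"

definition opt_travel :: "nat \<Rightarrow> (nat \<Rightarrow> nat) \<Rightarrow> nat" where
  "opt_travel m \<pi> =
     (LEAST d. \<exists>ps. valid_plan m \<pi> ps \<and> length ps = min_swaps m \<pi> \<and> travel ps = d)"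

text \<open>Inner loop, started at cell i holding label g; a is the current arrangement
  (a c = label of item in cell c). Fuel argument bounds the number of iterations
  (fuel m always suffices).\<close>
fun sweep_inner :: "nat \<Rightarrow> nat \<Rightarrow> (nat \<Rightarrow> nat) \<Rightarrow> nat \<Rightarrow> nat list \<times> (nat \<Rightarrow> nat)" where
  "sweep_inner 0 i a g = ([i], a(i := g))"
| "sweep_inner (Suc f) i a g =
     (if g = i then ([i], a(i := g))
      else (let (ps, a') = sweep_inner f i (a(g := g)) (a g) in (g # ps, a')))"

fun sweep_outer :: "nat \<Rightarrow> nat \<Rightarrow> (nat \<Rightarrow> nat) \<Rightarrow> nat list" where
  "sweep_outer 0 m a = []"
| "sweep_outer (Suc f) m a =
     (if \<exists>i\<in>{1..m}. a i \<noteq> i then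
        (let i = (LEAST i. i \<in> {1..m} \<and> a i \<noteq> i);
             (ps, a') = sweep_inner m i a (a i)
         in i # ps @ sweep_outer f m a')
      else [])"

text \<open>The plan produced by SweepCyclesLOR (the final return to cell 1 is
  accounted for in travel).\<close>
definition sweep_plan :: "nat \<Rightarrow> (nat \<Rightarrow> nat) \<Rightarrow> nat list" where
  "sweep_plan m \<pi> = sweep_outer m m \<pi>"

definition perm_expect :: "nat \<Rightarrow> ((nat \<Rightarrow> nat) \<Rightarrow> real) \<Rightarrow> real" where
  "perm_expect m X =
     (\<Sum>\<pi>\<in>{\<pi>. \<pi> permutes {1..m}}. X \<pi>) / real (card {\<pi>. \<pi> permutes {1..m}})"

end

theory Submission
  imports Defs
begin

definition emb :: "nat \<Rightarrow> (nat \<Rightarrow> nat) \<Rightarrow> nat \<Rightarrow> nat option" where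
  "emb m a = (\<lambda>i. if i \<in> {1..m} then Some (a i) else None)"

fun path :: "nat \<Rightarrow> nat list \<Rightarrow> nat" where
  "path p [] = 0"
| "path p (q # qs) = cell_dist p q + path q qs"

lemma travel_from_append:
  "travel_from p (xs @ ys) = path p xs + travel_from (last (p # xs)) ys"
  by (induction xs arbitrary: p) auto

lemma exec_append: "exec_plan (xs @ ys) s = exec_plan ys (exec_plan xs s)"
  by (induction xs arbitrary: s) auto

lemma sigma1_eq:
  assumes "g \<noteq> i"
  shows "(a(g := g))(i := a g) = (a(i := g)) \<circ> Transposition.transpose g i"
  using assms by (auto simp: Transposition.transpose_def fun_eq_iff)

lemma base_case:
  assumes "(a(i := i)) permutes {1..m}" "i \<in> {1..m}"
  shows "[i] \<noteq> [] \<and> last [i] = i \<and> distinct [i] \<and> set [i] \<subseteq> {1..m} \<and> i \<in> set [i]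
    \<and> a(i:=i) permutes {1..m}
    \<and> (\<forall>x\<in>set [i]. (a(i:=i)) x = x) \<and> (\<forall>x. x \<notin> set [i] \<longrightarrow> (a(i:=i)) x = (a(i:=i)) x)
    \<and> (\<forall>x\<in>set [i]. x \<noteq> i \<longrightarrow> (a(i:=i)) x \<noteq> x)
    \<and> (\<forall>x. x \<in> set [i] \<longleftrightarrow> (a(i:=i)) x \<in> set [i])
    \<and> (\<forall>r. path r [i] = cell_dist r i + (\<Sum>x\<in>set [i] - {i}. cell_dist x ((a(i:=i)) x)))
    \<and> exec_plan [i] ((emb m a)(i := None), Some i) = (emb m (a(i:=i)), None)"
proof -
  have inj: "inj (a(i:=i))" using assms(1) permutes_inj by blast
  have cl: "\<forall>x. x \<noteq> i \<longrightarrow> a x \<noteq> i"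
    using inj by (metis fun_upd_same fun_upd_other injD)
  have ex: "exec_plan [i] ((emb m a)(i := None), Some i) = (emb m (a(i:=i)), None)"
    using assms(2) by (auto simp: pick_n_swap_def emb_def fun_eq_iff)
  show ?thesis using assms ex by (simp add: cell_dist_def) (use cl in blast)
qed

lemma inner:
  assumes "(a(i := g)) permutes {1..m}" "i \<in> {1..m}"
    "card {x\<in>{1..m}. x \<noteq> i \<and> (a(i:=g)) x \<noteq> x} \<le> f"
    "sweep_inner f i a g = (ps, a')"
  shows "ps \<noteq> [] \<and> last ps = i \<and> distinct ps \<and> set ps \<subseteq> {1..m} \<and> i \<in> set ps
    \<and> a' permutes {1..m}
    \<and> (\<forall>x\<in>set ps. a' x = x) \<and> (\<forall>x. x \<notin> set ps \<longrightarrow> a' x = (a(i:=g)) x)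
    \<and> (\<forall>x\<in>set ps. x \<noteq> i \<longrightarrow> (a(i:=g)) x \<noteq> x)
    \<and> (\<forall>x. x \<in> set ps \<longleftrightarrow> (a(i:=g)) x \<in> set ps)
    \<and> (\<forall>r. path r ps = cell_dist r g + (\<Sum>x\<in>set ps - {i}. cell_dist x ((a(i:=g)) x)))
    \<and> exec_plan ps ((emb m a)(i := None), Some g) = (emb m a', None)"
  using assms
proof (induction f arbitrary: a g ps a')
  case 0
  have gi: "g = i"
  proof (rule ccontr)
    assume "g \<noteq> i"
    have inj: "inj (a(i:=g))" using 0(1) permutes_inj by blast
    have gm: "g \<in> {1..m}" using permutes_in_image[OF 0(1)] 0(2) by (metis fun_upd_same)
    have "(a(i:=g)) g \<noteq> g"
      using inj \<open>g \<noteq> i\<close> by (metis fun_upd_same injD)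
    hence "g \<in> {x\<in>{1..m}. x \<noteq> i \<and> (a(i:=g)) x \<noteq> x}" using gm \<open>g \<noteq> i\<close> by auto
    hence "card {x\<in>{1..m}. x \<noteq> i \<and> (a(i:=g)) x \<noteq> x} > 0"
      by (metis (no_types, lifting) card_gt_0_iff empty_iff finite_atLeastAtMost finite_subset mem_Collect_eq subsetI)
    thus False using 0(3) by linarith
  qed
  have "ps = [i]" "a' = a(i := g)" using 0(4) by auto
  then show ?case using base_case[OF 0(1)[unfolded gi] 0(2)] gi by (simp del: fun_upd_apply)
next
  case (Suc f)
  show ?case
  proof (cases "g = i")
    case True
    have "ps = [i]" "a' = a(i := g)" using Suc(5) True by auto
    then show ?thesis using base_case[OF Suc(2)[unfolded True] Suc(3)] True by (simp del: fun_upd_apply)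
  next
    case False
    define \<sigma> where "\<sigma> = a(i := g)"
    define a1 where "a1 = a(g := g)"
    obtain ps1 a'' where rec: "sweep_inner f i a1 (a g) = (ps1, a'')"
      by (metis surj_pair)
    have pseq: "ps = g # ps1" and a'eq: "a' = a''"
      using Suc(5) False rec by (auto simp: a1_def)
    have gm: "g \<in> {1..m}" using permutes_in_image[OF Suc(2)] Suc(3) by (metis fun_upd_same)
    have inj: "inj \<sigma>" using Suc(2) permutes_inj \<sigma>_def by blast
    have sgg: "\<sigma> g \<noteq> g"
      using inj False unfolding \<sigma>_def by (metis fun_upd_same injD)
    have s1: "a1(i := a g) = \<sigma> \<circ> Transposition.transpose g i"
      unfolding a1_def \<sigma>_def using sigma1_eq[OF False] .
    have perm1: "a1(i := a g) permutes {1..m}"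
      unfolding s1 \<sigma>_def
      by (rule permutes_compose[OF permutes_swap_id[OF gm Suc(3)] Suc(2)])
    have Fsub: "{x\<in>{1..m}. x \<noteq> i \<and> (a1(i:=a g)) x \<noteq> x} \<subseteq> {x\<in>{1..m}. x \<noteq> i \<and> \<sigma> x \<noteq> x} - {g}"
      using False by (auto simp: a1_def \<sigma>_def)
    have gin: "g \<in> {x\<in>{1..m}. x \<noteq> i \<and> \<sigma> x \<noteq> x}" using gm False sgg by auto
    have "card {x\<in>{1..m}. x \<noteq> i \<and> (a1(i:=a g)) x \<noteq> x} \<le> card ({x\<in>{1..m}. x \<noteq> i \<and> \<sigma> x \<noteq> x} - {g})"
      by (rule card_mono[OF _ Fsub]) auto
    also have "\<dots> = card {x\<in>{1..m}. x \<noteq> i \<and> \<sigma> x \<noteq> x} - 1"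
      using gin by (simp add: card_Diff_singleton)
    finally have fuel: "card {x\<in>{1..m}. x \<noteq> i \<and> (a1(i:=a g)) x \<noteq> x} \<le> f"
      using Suc(4) \<sigma>_def by simp
    define \<sigma>1 where "\<sigma>1 = a1(i := a g)"
    have IH: "ps1 \<noteq> [] \<and> last ps1 = i \<and> distinct ps1 \<and> set ps1 \<subseteq> {1..m} \<and> i \<in> set ps1
    \<and> a'' permutes {1..m}
    \<and> (\<forall>x\<in>set ps1. a'' x = x) \<and> (\<forall>x. x \<notin> set ps1 \<longrightarrow> a'' x = \<sigma>1 x)
    \<and> (\<forall>x\<in>set ps1. x \<noteq> i \<longrightarrow> \<sigma>1 x \<noteq> x)
    \<and> (\<forall>x. x \<in> set ps1 \<longleftrightarrow> \<sigma>1 x \<in> set ps1)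
    \<and> (\<forall>r. path r ps1 = cell_dist r (a g) + (\<Sum>x\<in>set ps1 - {i}. cell_dist x (\<sigma>1 x)))
    \<and> exec_plan ps1 ((emb m a1)(i := None), Some (a g)) = (emb m a'', None)"
      unfolding \<sigma>1_def by (rule Suc.IH[OF perm1 Suc(3) fuel rec])
    have s1g: "\<sigma>1 g = g" using False by (simp add: \<sigma>1_def a1_def)
    have s1i: "\<sigma>1 i = \<sigma> g" using False by (simp add: \<sigma>1_def a1_def \<sigma>_def)
    have s1o: "\<And>x. x \<noteq> g \<Longrightarrow> x \<noteq> i \<Longrightarrow> \<sigma>1 x = \<sigma> x"
      by (simp add: \<sigma>1_def a1_def \<sigma>_def)
    have H7: "\<forall>x\<in>set ps1. x \<noteq> i \<longrightarrow> \<sigma>1 x \<noteq> x" using IH by blast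
    have gnot: "g \<notin> set ps1" using H7 s1g False by blast
    have iin: "i \<in> set ps1" using IH by blast
    have closed1: "\<forall>x. x \<in> set ps1 \<longleftrightarrow> \<sigma>1 x \<in> set ps1" using IH by blast
    have lastp: "last ps1 = i" "ps1 \<noteq> []" "distinct ps1" "set ps1 \<subseteq> {1..m}" "a'' permutes {1..m}"
      using IH by blast+
    have A1: "\<forall>x\<in>set ps1. a'' x = x" and A2: "\<forall>x. x \<notin> set ps1 \<longrightarrow> a'' x = \<sigma>1 x"
      using IH by blast+
    have P1: "\<forall>r. path r ps1 = cell_dist r (a g) + (\<Sum>x\<in>set ps1 - {i}. cell_dist x (\<sigma>1 x))"
      using IH by blast
    have E1: "exec_plan ps1 ((emb m a1)(i := None), Some (a g)) = (emb m a'', None)"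
      using IH by blast
    have si: "\<sigma> i = g" by (simp add: \<sigma>_def)
    have closed: "\<forall>x. x \<in> set ps \<longleftrightarrow> \<sigma> x \<in> set ps"
    proof
      fix x
      show "x \<in> set ps \<longleftrightarrow> \<sigma> x \<in> set ps"
      proof (cases "x = g")
        case True
        have "\<sigma>1 i \<in> set ps1" using closed1 iin by blast
        hence "\<sigma> x \<in> set ps" using s1i pseq True by simp
        then show ?thesis using pseq True by simp
      next
        case xg: False
        show ?thesis
        proof (cases "x = i")
          case True then show ?thesis using si pseq iin by simp
        next
          case False
          have ng: "\<sigma> x \<noteq> g" using inj si False by (metis injD)
          have c: "x \<in> set ps1 \<longleftrightarrow> \<sigma>1 x \<in> set ps1" using closed1 by blast
          have e: "\<sigma>1 x = \<sigma> x" using s1o[OF xg False] .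
          have "x \<in> set ps \<longleftrightarrow> x \<in> set ps1" using pseq xg by simp
          also have "\<dots> \<longleftrightarrow> \<sigma> x \<in> set ps1" using c e by simp
          also have "\<dots> \<longleftrightarrow> \<sigma> x \<in> set ps" using pseq ng by simp
          finally show ?thesis .
        qed
      qed
    qed
    have sumeq: "(\<Sum>x\<in>set ps - {i}. cell_dist x (\<sigma> x)) =
        cell_dist g (\<sigma> g) + (\<Sum>x\<in>set ps1 - {i}. cell_dist x (\<sigma>1 x))"
    proof -
      have "set ps - {i} = insert g (set ps1 - {i})" using pseq False by auto
      hence "(\<Sum>x\<in>set ps - {i}. cell_dist x (\<sigma> x)) = cell_dist g (\<sigma> g) + (\<Sum>x\<in>set ps1 - {i}. cell_dist x (\<sigma> x))"
        using gnot by simp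
      also have "(\<Sum>x\<in>set ps1 - {i}. cell_dist x (\<sigma> x)) = (\<Sum>x\<in>set ps1 - {i}. cell_dist x (\<sigma>1 x))"
      proof (rule sum.cong)
        fix x assume "x \<in> set ps1 - {i}"
        hence "x \<noteq> g" "x \<noteq> i" using gnot by auto
        thus "cell_dist x (\<sigma> x) = cell_dist x (\<sigma>1 x)" using s1o by simp
      qed simp
      finally show ?thesis .
    qed
    have emb1: "((emb m a)(i := None))(g := Some g) = (emb m a1)(i := None)"
      using gm False by (auto simp: emb_def a1_def fun_eq_iff)
    have exec1: "exec_plan ps ((emb m a)(i := None), Some g) = (emb m a', None)"
    proof -
      have "pick_n_swap g ((emb m a)(i := None), Some g) = ((emb m a1)(i := None), Some (a g))"
        using gm False emb1 by (simp add: pick_n_swap_def emb_def)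
      thus ?thesis using E1 pseq a'eq by simp
    qed
    show ?thesis
      unfolding \<sigma>_def[symmetric]
    proof (intro conjI)
      show "ps \<noteq> []" using pseq by simp
      show "last ps = i" using lastp pseq by simp
      show "distinct ps" using lastp pseq gnot by simp
      show "set ps \<subseteq> {1..m}" using lastp pseq gm by simp
      show "i \<in> set ps" using pseq iin by simp
      show "a' permutes {1..m}" using lastp a'eq by simp
      show "\<forall>x\<in>set ps. a' x = x" using A1 A2 a'eq pseq gnot s1g by auto
      show "\<forall>x. x \<notin> set ps \<longrightarrow> a' x = \<sigma> x" using A2 a'eq pseq iin s1o by auto
      show "\<forall>x\<in>set ps. x \<noteq> i \<longrightarrow> \<sigma> x \<noteq> x"
      proof (intro ballI impI)
        fix x assume "x \<in> set ps" "x \<noteq> i"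
        show "\<sigma> x \<noteq> x"
        proof (cases "x = g")
          case True then show ?thesis using sgg by simp
        next
          case False
          hence "x \<in> set ps1" using \<open>x \<in> set ps\<close> pseq by simp
          then show ?thesis using H7 s1o[OF False \<open>x \<noteq> i\<close>] \<open>x \<noteq> i\<close> by metis
        qed
      qed
      show "\<forall>x. x \<in> set ps \<longleftrightarrow> \<sigma> x \<in> set ps" using closed .
      show "\<forall>r. path r ps = cell_dist r g + (\<Sum>x\<in>set ps - {i}. cell_dist x (\<sigma> x))"
        using P1 pseq sumeq s1i si False by (simp add: \<sigma>_def)
      show "exec_plan ps ((emb m a)(i := None), Some g) = (emb m a', None)" using exec1 .
    qed
  qed
qed


lemma outer_step:
  assumes perm: "a permutes {1..m}" and ex: "\<exists>i\<in>{1..m}. a i \<noteq> i"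
    and idef: "i = (LEAST i. i \<in> {1..m} \<and> a i \<noteq> i)"
    and si: "sweep_inner m i a (a i) = (ps, a')"
  shows "i \<in> {1..m} \<and> a i \<noteq> i \<and> (\<forall>x\<in>{1..m}. x < i \<longrightarrow> a x = x)
    \<and> ps \<noteq> [] \<and> last ps = i \<and> distinct ps \<and> set ps \<subseteq> {1..m} \<and> i \<in> set ps
    \<and> a' permutes {1..m}
    \<and> (\<forall>x\<in>set ps. a' x = x) \<and> (\<forall>x. x \<notin> set ps \<longrightarrow> a' x = a x)
    \<and> (\<forall>x\<in>set ps. a x \<noteq> x)
    \<and> (\<forall>x. x \<in> set ps \<longleftrightarrow> a x \<in> set ps)
    \<and> path i ps = (\<Sum>x\<in>set ps. cell_dist x (a x))
    \<and> exec_plan (i # ps) (emb m a, None) = (emb m a', None)"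
proof -
  have iP: "i \<in> {1..m} \<and> a i \<noteq> i" unfolding idef using ex by (metis (mono_tags, lifting) LeastI)
  have below: "\<forall>x\<in>{1..m}. x < i \<longrightarrow> a x = x" unfolding idef using not_less_Least by blast
  have aa: "a(i := a i) = a" by simp
  have fuel: "card {x\<in>{1..m}. x \<noteq> i \<and> (a(i:=a i)) x \<noteq> x} \<le> m"
  proof -
    have "card {x\<in>{1..m}. x \<noteq> i \<and> (a(i:=a i)) x \<noteq> x} \<le> card {1..m}"
      by (rule card_mono) auto
    thus ?thesis by simp
  qed
  have I: "ps \<noteq> [] \<and> last ps = i \<and> distinct ps \<and> set ps \<subseteq> {1..m} \<and> i \<in> set ps
    \<and> a' permutes {1..m}
    \<and> (\<forall>x\<in>set ps. a' x = x) \<and> (\<forall>x. x \<notin> set ps \<longrightarrow> a' x = a x)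
    \<and> (\<forall>x\<in>set ps. x \<noteq> i \<longrightarrow> a x \<noteq> x)
    \<and> (\<forall>x. x \<in> set ps \<longleftrightarrow> a x \<in> set ps)
    \<and> (\<forall>r. path r ps = cell_dist r (a i) + (\<Sum>x\<in>set ps - {i}. cell_dist x (a x)))
    \<and> exec_plan ps ((emb m a)(i := None), Some (a i)) = (emb m a', None)"
    using inner[OF _ _ fuel si] perm iP unfolding aa by blast
  have p: "path i ps = (\<Sum>x\<in>set ps. cell_dist x (a x))"
  proof -
    have "path i ps = cell_dist i (a i) + (\<Sum>x\<in>set ps - {i}. cell_dist x (a x))" using I by blast
    also have "\<dots> = (\<Sum>x\<in>set ps. cell_dist x (a x))"
    proof -
      have iin: "i \<in> set ps" using I by blast
      show ?thesis using sum.remove[OF List.finite_set iin, of "\<lambda>x. cell_dist x (a x)"] by simp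
    qed
    finally show ?thesis .
  qed
  have e: "exec_plan (i # ps) (emb m a, None) = (emb m a', None)"
  proof -
    have "pick_n_swap i (emb m a, None) = ((emb m a)(i := None), Some (a i))"
      using iP by (simp add: pick_n_swap_def emb_def)
    thus ?thesis using I by simp
  qed
  have mis: "\<forall>x\<in>set ps. a x \<noteq> x" using I iP by metis
  show ?thesis using iP below I p e mis by blast
qed

lemma outer_unfold:
  assumes "\<exists>i\<in>{1..m}. a i \<noteq> i" "i = (LEAST i. i \<in> {1..m} \<and> a i \<noteq> i)"
    "sweep_inner m i a (a i) = (ps, a')"
  shows "sweep_outer (Suc f) m a = i # ps @ sweep_outer f m a'"
  using assms by (simp add: Let_def)

lemma outer_valid:
  assumes "a permutes {1..m}" "card {x\<in>{1..m}. a x \<noteq> x} \<le> f"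
  shows "set (sweep_outer f m a) \<subseteq> {1..m} \<and> exec_plan (sweep_outer f m a) (emb m a, None) = goal_state m"
  using assms
proof (induction f arbitrary: a)
  case 0
  have "\<forall>x\<in>{1..m}. a x = x"
  proof
    fix x assume x: "x \<in> {1..m}"
    show "a x = x"
    proof (rule ccontr)
      assume "a x \<noteq> x"
      hence "{x\<in>{1..m}. a x \<noteq> x} \<noteq> {}" using x by auto
      hence "card {x\<in>{1..m}. a x \<noteq> x} > 0" by (simp add: card_gt_0_iff)
      thus False using 0(2) by linarith
    qed
  qed
  then show ?case by (simp add: emb_def goal_state_def fun_eq_iff)
next
  case (Suc f)
  show ?case
  proof (cases "\<exists>i\<in>{1..m}. a i \<noteq> i")
    case False
    then show ?thesis by (simp add: emb_def goal_state_def fun_eq_iff)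
  next
    case True
    define i where "i = (LEAST i. i \<in> {1..m} \<and> a i \<noteq> i)"
    obtain ps a' where si: "sweep_inner m i a (a i) = (ps, a')" by (metis surj_pair)
    note S = outer_step[OF Suc(2) True i_def si]
    have unf: "sweep_outer (Suc f) m a = i # ps @ sweep_outer f m a'"
      using outer_unfold[OF True i_def si] .
    have sub: "{x\<in>{1..m}. a' x \<noteq> x} \<subseteq> {x\<in>{1..m}. a x \<noteq> x} - {i}"
      using S by auto
    have "card {x\<in>{1..m}. a' x \<noteq> x} \<le> card ({x\<in>{1..m}. a x \<noteq> x} - {i})"
      by (rule card_mono[OF _ sub]) auto
    also have "\<dots> = card {x\<in>{1..m}. a x \<noteq> x} - 1"
      using S by (simp add: card_Diff_singleton)
    finally have fuel: "card {x\<in>{1..m}. a' x \<noteq> x} \<le> f" using Suc(3) by simp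
    have perm': "a' permutes {1..m}" using S by blast
    note IH = Suc.IH[OF perm' fuel]
    have "exec_plan (sweep_outer (Suc f) m a) (emb m a, None)
        = exec_plan (sweep_outer f m a') (exec_plan (i # ps) (emb m a, None))"
      unfolding unf by (simp only: exec_append[symmetric] append_Cons)
    also have "\<dots> = goal_state m" using S IH by simp
    finally show ?thesis using S IH unf by auto
  qed
qed

definition cnt :: "nat list \<Rightarrow> nat set \<Rightarrow> nat" where
  "cnt ps C = length (filter (\<lambda>q. q \<in> C) ps)"

lemma cnt_union: "A \<inter> B = {} \<Longrightarrow> cnt ps (A \<union> B) = cnt ps A + cnt ps B"
  unfolding cnt_def by (induction ps) auto

lemma cnt_le: "cnt ps C \<le> length ps"
  unfolding cnt_def by simp

definition badc :: "nat set \<Rightarrow> lor_state \<Rightarrow> nat" where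
  "badc C s = card {c\<in>C. fst s c \<noteq> Some c}"

definition P0 :: "nat set \<Rightarrow> lor_state \<Rightarrow> bool" where
  "P0 C s = ((\<forall>c\<in>C. fst s c \<noteq> Some c \<and> fst s c \<noteq> None) \<and> (\<forall>c\<in>C. snd s \<noteq> Some c)
     \<and> (\<forall>x. x \<notin> C \<longrightarrow> (\<forall>c\<in>C. fst s x \<noteq> Some c)))"

lemma need:
  assumes "finite C" "C \<noteq> {}" "C \<subseteq> {1..m}" "exec_plan ps s = goal_state m"
  shows "badc C s + (if P0 C s then 1 else 0) \<le> cnt ps C"
  using assms
proof (induction ps arbitrary: s)
  case Nil
  have s: "s = goal_state m" using Nil by simp
  have "{c\<in>C. fst s c \<noteq> Some c} = {}" using Nil(3) unfolding s goal_state_def by auto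
  hence b: "badc C s = 0" unfolding badc_def by (metis card.empty)
  obtain c where "c \<in> C" using Nil(2) by blast
  hence "\<not> P0 C s" using Nil(3) unfolding s P0_def goal_state_def by auto
  then show ?case using b by simp
next
  case (Cons q qs)
  define s' where "s' = pick_n_swap q s"
  have IH: "badc C s' + (if P0 C s' then 1 else 0) \<le> cnt qs C"
    using Cons.IH[OF Cons(2,3,4)] Cons(5) s'_def by simp
  show ?case
  proof (cases "q \<in> C")
    case False
    have "{c\<in>C. fst s' c \<noteq> Some c} = {c\<in>C. fst s c \<noteq> Some c}"
      using False by (auto simp: s'_def pick_n_swap_def)
    hence b: "badc C s' = badc C s" by (simp add: badc_def)
    have "P0 C s \<Longrightarrow> P0 C s'"
      using False unfolding P0_def s'_def pick_n_swap_def by auto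
    moreover have "cnt (q # qs) C = cnt qs C" using False by (simp add: cnt_def)
    ultimately show ?thesis using IH b by (auto split: if_splits)
  next
    case True
    have c: "cnt (q # qs) C = Suc (cnt qs C)" using True by (simp add: cnt_def)
    show ?thesis
    proof (cases "P0 C s")
      case P: True
      have "{c\<in>C. fst s' c \<noteq> Some c} = {c\<in>C. fst s c \<noteq> Some c}"
        using P True unfolding P0_def s'_def pick_n_swap_def by auto
      hence "badc C s' = badc C s" by (simp add: badc_def)
      then show ?thesis using IH c P by (auto split: if_splits)
    next
      case P: False
      have "{c\<in>C. fst s c \<noteq> Some c} \<subseteq> insert q {c\<in>C. fst s' c \<noteq> Some c}"
        unfolding s'_def pick_n_swap_def by auto
      hence "card {c\<in>C. fst s c \<noteq> Some c} \<le> card (insert q {c\<in>C. fst s' c \<noteq> Some c})"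
        by (rule card_mono[rotated]) (use Cons(2) in auto)
      also have "\<dots> \<le> Suc (card {c\<in>C. fst s' c \<noteq> Some c})"
        by (rule card_insert_le_m1) auto
      finally have "badc C s \<le> Suc (badc C s')" by (simp add: badc_def)
      then show ?thesis using IH c P by (auto split: if_splits)
    qed
  qed
qed

lemma cnt_lb:
  assumes "valid_plan m \<pi> ps" "C \<noteq> {}" "C \<subseteq> {1..m}" "\<forall>x\<in>C. \<pi> x \<noteq> x"
    "\<forall>x\<in>{1..m}. x \<notin> C \<longrightarrow> \<pi> x \<notin> C"
  shows "card C + 1 \<le> cnt ps C"
proof -
  have fin: "finite C" using assms(3) finite_subset by blast
  have ex: "exec_plan ps (init_state m \<pi>) = goal_state m" using assms(1) by (simp add: valid_plan_def)
  have "{c\<in>C. fst (init_state m \<pi>) c \<noteq> Some c} = C"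
    using assms(3,4) by (auto simp: init_state_def)
  hence b: "badc C (init_state m \<pi>) = card C" by (simp add: badc_def)
  have p: "P0 C (init_state m \<pi>)"
    using assms(3,4,5) unfolding P0_def init_state_def by auto
  show ?thesis using need[OF fin assms(2,3) ex] b p by simp
qed

lemma outer_lb:
  assumes valid: "valid_plan m \<pi> ps0"
  shows "a permutes {1..m} \<Longrightarrow> (\<forall>x\<in>{1..m}. a x \<noteq> x \<longrightarrow> a x = \<pi> x) \<Longrightarrow>
    (\<forall>x\<in>{1..m}. a x = x \<longrightarrow> \<pi> x \<in> {1..m} \<and> a (\<pi> x) = \<pi> x) \<Longrightarrow>
    length (sweep_outer f m a) \<le> cnt ps0 {x\<in>{1..m}. a x \<noteq> x}"
proof (induction f arbitrary: a)
  case 0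
  then show ?case by simp
next
  case (Suc f)
  show ?case
  proof (cases "\<exists>i\<in>{1..m}. a i \<noteq> i")
    case False
    then show ?thesis by simp
  next
    case True
    define i where "i = (LEAST i. i \<in> {1..m} \<and> a i \<noteq> i)"
    obtain ps a' where si: "sweep_inner m i a (a i) = (ps, a')" by (metis surj_pair)
    note S = outer_step[OF Suc(2) True i_def si]
    have unf: "sweep_outer (Suc f) m a = i # ps @ sweep_outer f m a'"
      using outer_unfold[OF True i_def si] .
    define M where "M = {x\<in>{1..m}. a x \<noteq> x}"
    define C where "C = set ps"
    have CM: "C \<subseteq> M" using S unfolding C_def M_def by auto
    have M': "{x\<in>{1..m}. a' x \<noteq> x} = M - C" using S unfolding C_def M_def by auto
    have perm': "a' permutes {1..m}" using S by blast
    have inv1: "\<forall>x\<in>{1..m}. a' x \<noteq> x \<longrightarrow> a' x = \<pi> x"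
      using S Suc(3) by metis
    have inv2: "\<forall>x\<in>{1..m}. a' x = x \<longrightarrow> \<pi> x \<in> {1..m} \<and> a' (\<pi> x) = \<pi> x"
    proof (intro ballI impI)
      fix x assume x: "x \<in> {1..m}" "a' x = x"
      show "\<pi> x \<in> {1..m} \<and> a' (\<pi> x) = \<pi> x"
      proof (cases "x \<in> C")
        case True
        have "\<pi> x = a x" using Suc(3) S x True unfolding C_def by metis
        moreover have "a x \<in> C" using S True unfolding C_def by blast
        ultimately show ?thesis using S unfolding C_def by auto
      next
        case False
        have "a x = x" using S x False unfolding C_def by metis
        hence h: "\<pi> x \<in> {1..m} \<and> a (\<pi> x) = \<pi> x" using Suc(4) x by blast
        then show ?thesis using S unfolding C_def by metis
      qed
    qed
    have IH: "length (sweep_outer f m a') \<le> cnt ps0 (M - C)"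
      using Suc.IH[OF perm' inv1 inv2] M' by simp
    have lb: "card C + 1 \<le> cnt ps0 C"
    proof (rule cnt_lb[OF valid])
      show "C \<noteq> {}" "C \<subseteq> {1..m}" using S unfolding C_def by auto
      show "\<forall>x\<in>C. \<pi> x \<noteq> x" using S Suc(3) unfolding C_def by (metis subsetD)
      show "\<forall>x\<in>{1..m}. x \<notin> C \<longrightarrow> \<pi> x \<notin> C"
      proof (intro ballI impI)
        fix x assume x: "x \<in> {1..m}" "x \<notin> C"
        show "\<pi> x \<notin> C"
        proof (cases "a x = x")
          case True
          hence "a (\<pi> x) = \<pi> x" using Suc(4) x by blast
          thus ?thesis using CM unfolding M_def by auto
        next
          case False
          hence "\<pi> x = a x" using Suc(3) x by metis
          thus ?thesis using S x unfolding C_def by metis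
        qed
      qed
    qed
    have len: "length ps = card C" using S unfolding C_def by (simp add: distinct_card)
    have split: "cnt ps0 M = cnt ps0 C + cnt ps0 (M - C)"
      using cnt_union[of C "M - C" ps0] CM by (simp add: Un_absorb1 Un_Diff_cancel)
    show ?thesis unfolding unf M_def[symmetric] using IH lb len split by simp
  qed
qed

definition Tsum :: "nat \<Rightarrow> (nat \<Rightarrow> nat) \<Rightarrow> nat" where
  "Tsum m a = (\<Sum>x\<in>{1..m}. cell_dist x (a x))"

lemma outer_travel:
  "a permutes {1..m} \<Longrightarrow> 1 \<le> p \<Longrightarrow> p \<le> m \<Longrightarrow> (\<forall>x\<in>{1..m}. a x \<noteq> x \<longrightarrow> p \<le> x) \<Longrightarrow>
   travel_from p (sweep_outer f m a) + p + 1 \<le> Tsum m a + 2 * m"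
proof (induction f arbitrary: a p)
  case 0
  then show ?case by (simp add: cell_dist_def)
next
  case (Suc f)
  show ?case
  proof (cases "\<exists>i\<in>{1..m}. a i \<noteq> i")
    case False
    then show ?thesis using Suc(3,4) by (simp add: cell_dist_def)
  next
    case True
    define i where "i = (LEAST i. i \<in> {1..m} \<and> a i \<noteq> i)"
    obtain ps a' where si: "sweep_inner m i a (a i) = (ps, a')" by (metis surj_pair)
    note S = outer_step[OF Suc(2) True i_def si]
    have unf: "sweep_outer (Suc f) m a = i # ps @ sweep_outer f m a'"
      using outer_unfold[OF True i_def si] .
    have perm': "a' permutes {1..m}" using S by blast
    have im: "1 \<le> i" "i \<le> m" "p \<le> i" using S Suc(5) by auto
    have mono': "\<forall>x\<in>{1..m}. a' x \<noteq> x \<longrightarrow> i \<le> x"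
    proof (intro ballI impI)
      fix x assume x: "x \<in> {1..m}" "a' x \<noteq> x"
      hence "x \<notin> set ps" using S by metis
      hence "a x \<noteq> x" using S x by metis
      thus "i \<le> x" using S x by (meson not_le)
    qed
    have IH: "travel_from i (sweep_outer f m a') + i + 1 \<le> Tsum m a' + 2 * m"
      using Suc.IH[OF perm' im(1,2) mono'] .
    have T: "Tsum m a = (\<Sum>x\<in>set ps. cell_dist x (a x)) + Tsum m a'"
    proof -
      have fin: "finite {1..m}" by simp
      have sub: "set ps \<subseteq> {1..m}" using S by blast
      have "Tsum m a = (\<Sum>x\<in>set ps. cell_dist x (a x)) + (\<Sum>x\<in>{1..m} - set ps. cell_dist x (a x))"
        unfolding Tsum_def using sum.subset_diff[OF sub fin, of "\<lambda>x. cell_dist x (a x)"] by linarith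
      moreover have "Tsum m a' = (\<Sum>x\<in>set ps. cell_dist x (a' x)) + (\<Sum>x\<in>{1..m} - set ps. cell_dist x (a' x))"
        unfolding Tsum_def using sum.subset_diff[OF sub fin, of "\<lambda>x. cell_dist x (a' x)"] by linarith
      moreover have "(\<Sum>x\<in>set ps. cell_dist x (a' x)) = 0" using S by (simp add: cell_dist_def)
      moreover have "(\<Sum>x\<in>{1..m} - set ps. cell_dist x (a' x)) = (\<Sum>x\<in>{1..m} - set ps. cell_dist x (a x))"
        using S by (intro sum.cong) auto
      ultimately show ?thesis by simp
    qed
    have "travel_from p (sweep_outer (Suc f) m a) = cell_dist p i + path i ps + travel_from i (sweep_outer f m a')"
    proof -
      have "travel_from p (sweep_outer (Suc f) m a) = cell_dist p i + travel_from i (ps @ sweep_outer f m a')"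
        unfolding unf by simp
      also have "travel_from i (ps @ sweep_outer f m a') = path i ps + travel_from (last (i # ps)) (sweep_outer f m a')"
        by (rule travel_from_append)
      also have "last (i # ps) = i" using S by simp
      finally show ?thesis by simp
    qed
    moreover have "cell_dist p i = i - p" using im by (simp add: cell_dist_def)
    moreover have "path i ps = (\<Sum>x\<in>set ps. cell_dist x (a x))" using S by blast
    ultimately show ?thesis using IH T im by simp
  qed
qed


definition tm :: "nat \<Rightarrow> nat option \<Rightarrow> nat" where
  "tm c ov = (case ov of None \<Rightarrow> 0 | Some l \<Rightarrow> cell_dist c l)"

definition Phi :: "nat \<Rightarrow> lor_state \<Rightarrow> nat \<Rightarrow> nat" where
  "Phi m s r = (\<Sum>c\<in>{1..m}. tm c (fst s c)) + tm r (snd s)"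

lemma cell_dist_tri: "cell_dist a c \<le> cell_dist a b + cell_dist b c"
  unfolding cell_dist_def by auto

lemma tm_tri: "tm r ov \<le> cell_dist r q + tm q ov"
  unfolding tm_def using cell_dist_tri by (auto split: option.splits)

lemma Phi_move: "Phi m s r \<le> cell_dist r q + Phi m s q"
  unfolding Phi_def using tm_tri[of r "snd s" q] by simp

lemma Phi_swap:
  assumes "q \<in> {1..m}"
  shows "Phi m (pick_n_swap q s) q = Phi m s q"
proof -
  have fin: "finite {1..m}" by simp
  have "(\<Sum>c\<in>{1..m}. tm c (((fst s)(q := snd s)) c)) = tm q (snd s) + (\<Sum>c\<in>{1..m} - {q}. tm c (fst s c))"
    using sum.remove[OF fin assms, of "\<lambda>c. tm c (((fst s)(q := snd s)) c)"] by simp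
  moreover have "(\<Sum>c\<in>{1..m}. tm c (fst s c)) = tm q (fst s q) + (\<Sum>c\<in>{1..m} - {q}. tm c (fst s c))"
    using sum.remove[OF fin assms, of "\<lambda>c. tm c (fst s c)"] by simp
  ultimately show ?thesis unfolding Phi_def pick_n_swap_def by simp
qed

lemma Phi_travel:
  "set ps \<subseteq> {1..m} \<Longrightarrow> Phi m s r \<le> travel_from r ps + Phi m (exec_plan ps s) 1"
proof (induction ps arbitrary: s r)
  case Nil
  then show ?case using Phi_move[of m s r 1] by simp
next
  case (Cons q qs)
  have q: "q \<in> {1..m}" using Cons(2) by simp
  have "Phi m s r \<le> cell_dist r q + Phi m s q" by (rule Phi_move)
  also have "Phi m s q = Phi m (pick_n_swap q s) q" using Phi_swap[OF q] by simp
  also have "\<dots> \<le> travel_from q qs + Phi m (exec_plan qs (pick_n_swap q s)) 1"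
    using Cons by simp
  finally show ?case by simp
qed

lemma travel_lb:
  assumes "valid_plan m \<pi> ps"
  shows "Tsum m \<pi> \<le> travel ps"
proof -
  have "Phi m (init_state m \<pi>) 1 \<le> travel_from 1 ps + Phi m (exec_plan ps (init_state m \<pi>)) 1"
    using Phi_travel assms unfolding valid_plan_def by blast
  moreover have "exec_plan ps (init_state m \<pi>) = goal_state m" using assms unfolding valid_plan_def by blast
  moreover have "Phi m (goal_state m) 1 = 0"
    unfolding Phi_def goal_state_def tm_def by (simp add: cell_dist_def)
  moreover have "Phi m (init_state m \<pi>) 1 = Tsum m \<pi>"
    unfolding Phi_def init_state_def tm_def Tsum_def by simp
  ultimately show ?thesis unfolding travel_def by simp
qed

lemma init_emb: "init_state m \<pi> = (emb m \<pi>, None)"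
  unfolding init_state_def emb_def by simp

lemma per_perm:
  assumes perm: "\<pi> permutes {1..m}"
  shows "valid_plan m \<pi> (sweep_plan m \<pi>) \<and> (\<forall>ps. valid_plan m \<pi> ps \<longrightarrow> length (sweep_plan m \<pi>) \<le> length ps)
    \<and> Tsum m \<pi> \<le> opt_travel m \<pi> \<and> opt_travel m \<pi> \<le> travel (sweep_plan m \<pi>)
    \<and> travel (sweep_plan m \<pi>) \<le> Tsum m \<pi> + 2 * m"
proof -
  have fuel: "card {x\<in>{1..m}. \<pi> x \<noteq> x} \<le> m"
  proof -
    have "card {x\<in>{1..m}. \<pi> x \<noteq> x} \<le> card {1..m}" by (rule card_mono) auto
    thus ?thesis by simp
  qed
  have valid: "valid_plan m \<pi> (sweep_plan m \<pi>)"
    using outer_valid[OF perm fuel] unfolding valid_plan_def sweep_plan_def init_emb by blast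
  have minl: "\<forall>ps. valid_plan m \<pi> ps \<longrightarrow> length (sweep_plan m \<pi>) \<le> length ps"
  proof (intro allI impI)
    fix ps assume v: "valid_plan m \<pi> ps"
    have inv2: "\<forall>x\<in>{1..m}. \<pi> x = x \<longrightarrow> \<pi> x \<in> {1..m} \<and> \<pi> (\<pi> x) = \<pi> x" by auto
    have "length (sweep_outer m m \<pi>) \<le> cnt ps {x\<in>{1..m}. \<pi> x \<noteq> x}"
      using outer_lb[OF v perm _ inv2] by blast
    thus "length (sweep_plan m \<pi>) \<le> length ps" unfolding sweep_plan_def using cnt_le order_trans by blast
  qed
  have ms: "min_swaps m \<pi> = length (sweep_plan m \<pi>)"
    unfolding min_swaps_def
  proof (rule Least_equality)
    show "\<exists>ps. valid_plan m \<pi> ps \<and> length ps = length (sweep_plan m \<pi>)" using valid by blast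
    show "\<And>y. \<exists>ps. valid_plan m \<pi> ps \<and> length ps = y \<Longrightarrow> length (sweep_plan m \<pi>) \<le> y"
      using minl by blast
  qed
  have ex: "\<exists>ps. valid_plan m \<pi> ps \<and> length ps = min_swaps m \<pi> \<and> travel ps = travel (sweep_plan m \<pi>)"
    using valid ms by (intro exI[of _ "sweep_plan m \<pi>"]) simp
  have o1: "opt_travel m \<pi> \<le> travel (sweep_plan m \<pi>)"
    unfolding opt_travel_def by (rule Least_le) (rule ex)
  have "\<exists>ps. valid_plan m \<pi> ps \<and> length ps = min_swaps m \<pi> \<and> travel ps = opt_travel m \<pi>"
    unfolding opt_travel_def by (rule LeastI_ex) (use ex in blast)
  then obtain ps where "valid_plan m \<pi> ps" "travel ps = opt_travel m \<pi>" by blast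
  hence o2: "Tsum m \<pi> \<le> opt_travel m \<pi>" using travel_lb by metis
  have o3: "travel (sweep_plan m \<pi>) \<le> Tsum m \<pi> + 2 * m"
  proof (cases "m = 0")
    case True
    then show ?thesis by (simp add: sweep_plan_def travel_def cell_dist_def)
  next
    case False
    have "travel_from 1 (sweep_outer m m \<pi>) + 1 + 1 \<le> Tsum m \<pi> + 2 * m"
      using outer_travel[OF perm, of 1 m] False by auto
    thus ?thesis unfolding travel_def sweep_plan_def by simp
  qed
  show ?thesis using valid minl o1 o2 o3 by blast
qed

lemma real_cell_dist: "real (cell_dist a b) = \<bar>real a - real b\<bar>"
  unfolding cell_dist_def by auto

definition refl_m :: "nat \<Rightarrow> nat \<Rightarrow> nat" where
  "refl_m m x = (if x \<in> {1..m} then m + 1 - x else x)"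

lemma refl_m_invol: "refl_m m (refl_m m x) = x"
  unfolding refl_m_def by auto

lemma refl_m_permutes: "refl_m m permutes {1..m}"
proof (rule bij_imp_permutes)
  show "bij_betw (refl_m m) {1..m} {1..m}"
    by (rule bij_betw_byWitness[where f' = "refl_m m"]) (auto simp: refl_m_def)
  show "\<And>x. x \<notin> {1..m} \<Longrightarrow> refl_m m x = x" unfolding refl_m_def by auto
qed

lemma sq_sum: "(\<Sum>x\<in>{1..n}. (2 * real x - c)^2) = 4 * real n * (real n + 1) * (2 * real n + 1) / 6 - 2 * c * real n * (real n + 1) + real n * c^2"
proof (induction n)
  case 0 then show ?case by simp
next
  case (Suc n)
  have "{1..Suc n} = insert (Suc n) {1..n}" by auto
  hence "(\<Sum>x\<in>{1..Suc n}. (2 * real x - c)^2) = (2 * real (Suc n) - c)^2 + (\<Sum>x\<in>{1..n}. (2 * real x - c)^2)"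
    by simp
  then show ?case using Suc by (simp add: power2_eq_square field_simps)
qed

lemma K_lb:
  assumes "m \<ge> 1"
  shows "(\<Sum>x\<in>{1..m}. \<bar>2 * real x - real m - 1\<bar>) \<ge> (real m ^ 2 - 1) / 3"
proof -
  have mpos: "real m > 0" using assms by simp
  have hx: "\<forall>x\<in>{1..m}. (2 * real x - (real m + 1))^2 / real m \<le> \<bar>2 * real x - real m - 1\<bar>"
  proof
    fix x assume x: "x \<in> {1..m}"
    have b: "\<bar>2 * real x - real m - 1\<bar> \<le> real m" using x by auto
    have "(2 * real x - (real m + 1))^2 = \<bar>2 * real x - real m - 1\<bar> * \<bar>2 * real x - real m - 1\<bar>"
      by (simp add: power2_eq_square abs_mult_self_eq algebra_simps)
    also have "\<dots> \<le> real m * \<bar>2 * real x - real m - 1\<bar>"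
      by (rule mult_right_mono[OF b]) simp
    finally show "(2 * real x - (real m + 1))^2 / real m \<le> \<bar>2 * real x - real m - 1\<bar>"
      using mpos by (simp add: divide_le_eq mult.commute)
  qed
  have "(\<Sum>x\<in>{1..m}. (2 * real x - (real m + 1))^2 / real m) \<le> (\<Sum>x\<in>{1..m}. \<bar>2 * real x - real m - 1\<bar>)"
    by (rule sum_mono) (use hx in blast)
  moreover have "(\<Sum>x\<in>{1..m}. (2 * real x - (real m + 1))^2 / real m) = (real m ^ 2 - 1) / 3"
  proof -
    have "(\<Sum>x\<in>{1..m}. (2 * real x - (real m + 1))^2 / real m) = (\<Sum>x\<in>{1..m}. (2 * real x - (real m + 1))^2) / real m"
      by (simp add: sum_divide_distrib)
    also have "\<dots> = (real m ^ 2 - 1) / 3"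
      unfolding sq_sum using mpos by (simp add: field_simps power2_eq_square)
    finally show ?thesis .
  qed
  ultimately show ?thesis by simp
qed

lemma pair_lb:
  assumes "\<pi> permutes {1..m}"
  shows "real (Tsum m \<pi>) + real (Tsum m (refl_m m \<circ> \<pi>)) \<ge> (\<Sum>x\<in>{1..m}. \<bar>2 * real x - real m - 1\<bar>)"
proof -
  have "real (Tsum m \<pi>) + real (Tsum m (refl_m m \<circ> \<pi>)) =
      (\<Sum>x\<in>{1..m}. \<bar>real x - real (\<pi> x)\<bar> + \<bar>real x - real (refl_m m (\<pi> x))\<bar>)"
    unfolding Tsum_def by (simp add: real_cell_dist sum.distrib)
  also have "\<dots> \<ge> (\<Sum>x\<in>{1..m}. \<bar>2 * real x - real m - 1\<bar>)"
  proof (rule sum_mono)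
    fix x assume x: "x \<in> {1..m}"
    have px: "\<pi> x \<in> {1..m}" using permutes_in_image[OF assms] x by simp
    hence "real (refl_m m (\<pi> x)) = real m + 1 - real (\<pi> x)" by (auto simp: refl_m_def)
    thus "\<bar>2 * real x - real m - 1\<bar> \<le> \<bar>real x - real (\<pi> x)\<bar> + \<bar>real x - real (refl_m m (\<pi> x))\<bar>"
      by linarith
  qed
  finally show ?thesis .
qed

lemma card_perms_pos: "card {\<pi>. \<pi> permutes {1..(m::nat)}} > 0"
proof -
  have "finite {\<pi>. \<pi> permutes {1..m}}" using finite_permutations[of "{1..m::nat}"] by simp
  moreover have "id \<in> {\<pi>. \<pi> permutes {1..m}}" by simp
  ultimately show ?thesis by (metis card_gt_0_iff empty_iff)
qed

lemma ET_lb: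
  assumes "m \<ge> 1"
  shows "perm_expect m (\<lambda>\<pi>. real (Tsum m \<pi>)) \<ge> (real m ^ 2 - 1) / 6"
proof -
  define P where "P = {\<pi>. \<pi> permutes {1..m}}"
  have finP: "finite P" unfolding P_def using finite_permutations[of "{1..m::nat}"] by simp
  have Npos: "card P > 0" unfolding P_def by (rule card_perms_pos)
  define K where "K = (\<Sum>x\<in>{1..m}. \<bar>2 * real x - real m - 1\<bar>)"
  have rp: "refl_m m permutes {Suc 0..m}" using refl_m_permutes[of m] by simp
  have re: "(\<Sum>\<pi>\<in>P. real (Tsum m (refl_m m \<circ> \<pi>))) = (\<Sum>\<pi>\<in>P. real (Tsum m \<pi>))"
    by (rule sum.reindex_bij_witness[of _ "\<lambda>\<pi>. refl_m m \<circ> \<pi>" "\<lambda>\<pi>. refl_m m \<circ> \<pi>"])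
       (auto simp: P_def fun_eq_iff refl_m_invol intro: permutes_compose[OF _ rp])
  have "real (card P) * K \<le> (\<Sum>\<pi>\<in>P. real (Tsum m \<pi>) + real (Tsum m (refl_m m \<circ> \<pi>)))"
  proof -
    have "(\<Sum>\<pi>\<in>P. K) \<le> (\<Sum>\<pi>\<in>P. real (Tsum m \<pi>) + real (Tsum m (refl_m m \<circ> \<pi>)))"
      by (rule sum_mono) (use pair_lb in \<open>auto simp: P_def K_def\<close>)
    thus ?thesis by simp
  qed
  also have "\<dots> = 2 * (\<Sum>\<pi>\<in>P. real (Tsum m \<pi>))" using re by (simp add: sum.distrib)
  finally have A: "real (card P) * K \<le> 2 * (\<Sum>\<pi>\<in>P. real (Tsum m \<pi>))" .
  have KK: "K \<ge> (real m ^ 2 - 1) / 3" using K_lb[OF assms] K_def by simp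
  have "perm_expect m (\<lambda>\<pi>. real (Tsum m \<pi>)) = (\<Sum>\<pi>\<in>P. real (Tsum m \<pi>)) / real (card P)"
    unfolding perm_expect_def P_def ..
  also have "\<dots> \<ge> K / 2" using A Npos by (simp add: field_simps)
  finally show ?thesis using KK by simp
qed

lemma lim_aux: "(\<lambda>m::nat. 1 + 24 / real m) \<longlonglongrightarrow> 1"
  using tendsto_add[OF tendsto_const[of "1::real"] lim_const_over_n[of 24]] by simp

lemma pe_mono:
  assumes "\<And>\<pi>. \<pi> permutes {1..m} \<Longrightarrow> X \<pi> \<le> Y \<pi>"
  shows "perm_expect m X \<le> perm_expect m Y"
  unfolding perm_expect_def
  by (rule divide_right_mono[OF sum_mono]) (use assms in auto)

lemma pe_add_const: "perm_expect m (\<lambda>\<pi>. X \<pi> + c) = perm_expect m X + c"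
  using card_perms_pos[of m] unfolding perm_expect_def
  by (simp add: sum.distrib add_divide_distrib)

lemma ratio_bounds:
  fixes a b c d :: real
  assumes "0 < a" "a \<le> b" "b \<le> c" "c \<le> a + d"
  shows "1 \<le> c / b \<and> c / b \<le> 1 + d / a"
proof
  have bpos: "b > 0" using assms by simp
  show "1 \<le> c / b" using bpos assms by simp
  have "c / b \<le> (a + d) / b" using bpos assms by (simp add: divide_right_mono)
  also have "\<dots> \<le> (a + d) / a"
    using assms by (intro divide_left_mono) (auto intro: mult_pos_pos)
  also have "\<dots> = 1 + d / a" using assms by (simp add: field_simps)
  finally show "c / b \<le> 1 + d / a" .
qed

lemma small_bound:
  fixes a :: real and m :: nat
  assumes "m \<ge> 2" "a \<ge> (real m ^ 2 - 1) / 6"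
  shows "2 * real m / a \<le> 24 / real m"
proof -
  have m2: "real m \<ge> 2" using assms by simp
  have "real m ^ 2 \<ge> 2 ^ 2" using m2 by (rule power_mono) simp
  hence h: "(real m ^ 2 - 1) / 6 \<ge> real m ^ 2 / 12" by simp
  hence apos: "a \<ge> real m ^ 2 / 12" using assms by simp
  have pos: "real m ^ 2 / 12 > 0" using m2 by simp
  have a_pos: "a > 0" using apos pos by linarith
  have "2 * real m / a \<le> 2 * real m / (real m ^ 2 / 12)"
    by (rule divide_left_mono[OF apos]) (use m2 pos a_pos in auto)
  also have "\<dots> = 24 / real m" using m2 by (simp add: field_simps power2_eq_square)
  finally show ?thesis .
qed


theorem proposition2:
  shows "(\<forall>m \<pi>. \<pi> permutes {1..m} \<longrightarrow>
            valid_plan m \<pi> (sweep_plan m \<pi>) \<and>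
            (\<forall>ps. valid_plan m \<pi> ps \<longrightarrow> length (sweep_plan m \<pi>) \<le> length ps))
       \<and> (\<lambda>m. perm_expect m (\<lambda>\<pi>. real (travel (sweep_plan m \<pi>)))
              / perm_expect m (\<lambda>\<pi>. real (opt_travel m \<pi>))) \<longlonglongrightarrow> 1"
proof
  show "\<forall>m \<pi>. \<pi> permutes {1..m} \<longrightarrow>
            valid_plan m \<pi> (sweep_plan m \<pi>) \<and>
            (\<forall>ps. valid_plan m \<pi> ps \<longrightarrow> length (sweep_plan m \<pi>) \<le> length ps)"
    using per_perm by blast
  define ES where "ES m = perm_expect m (\<lambda>\<pi>. real (travel (sweep_plan m \<pi>)))" for m
  define EO where "EO m = perm_expect m (\<lambda>\<pi>. real (opt_travel m \<pi>))" for m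
  define ET where "ET m = perm_expect m (\<lambda>\<pi>. real (Tsum m \<pi>))" for m
  have bnd: "1 \<le> ES m / EO m \<and> ES m / EO m \<le> 1 + 24 / real m" if m2: "m \<ge> 2" for m
  proof -
    have lb: "ET m \<ge> (real m ^ 2 - 1) / 6" unfolding ET_def using ET_lb m2 by simp
    have "real m ^ 2 \<ge> 2 ^ 2" using m2 by (intro power_mono) auto
    hence apos: "ET m > 0" using lb by simp
    have "ET m \<le> EO m" unfolding ET_def EO_def
      by (rule pe_mono) (use per_perm in simp)
    moreover have "EO m \<le> ES m" unfolding EO_def ES_def
      by (rule pe_mono) (use per_perm in simp)
    moreover have "ES m \<le> ET m + 2 * real m"
    proof -
      have "ES m \<le> perm_expect m (\<lambda>\<pi>. real (Tsum m \<pi>) + 2 * real m)" unfolding ES_def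
      proof (rule pe_mono)
        fix \<pi> :: "nat \<Rightarrow> nat" assume "\<pi> permutes {1..m}"
        hence "travel (sweep_plan m \<pi>) \<le> Tsum m \<pi> + 2 * m" using per_perm by blast
        thus "real (travel (sweep_plan m \<pi>)) \<le> real (Tsum m \<pi>) + 2 * real m"
          by (metis of_nat_add of_nat_le_iff of_nat_mult of_nat_numeral)
      qed
      also have "\<dots> = ET m + 2 * real m" unfolding ET_def by (rule pe_add_const)
      finally show ?thesis .
    qed
    ultimately have rb: "1 \<le> ES m / EO m \<and> ES m / EO m \<le> 1 + 2 * real m / ET m"
      using ratio_bounds[OF apos] by blast
    have "2 * real m / ET m \<le> 24 / real m" using small_bound[OF m2 lb] .
    thus ?thesis using rb by linarith
  qed
  show "(\<lambda>m. perm_expect m (\<lambda>\<pi>. real (travel (sweep_plan m \<pi>)))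
              / perm_expect m (\<lambda>\<pi>. real (opt_travel m \<pi>))) \<longlonglongrightarrow> 1"
    unfolding ES_def[symmetric] EO_def[symmetric]
  proof (rule tendsto_sandwich[of "\<lambda>_. 1" _ _ "\<lambda>m. 1 + 24 / real m"])
    show "\<forall>\<^sub>F n in sequentially. 1 \<le> ES n / EO n"
      using bnd by (auto simp: eventually_sequentially intro: exI[of _ 2])
    show "\<forall>\<^sub>F n in sequentially. ES n / EO n \<le> 1 + 24 / real n"
      using bnd by (auto simp: eventually_sequentially intro: exI[of _ 2])
    show "(\<lambda>_. 1) \<longlonglongrightarrow> (1::real)" by simp
    show "(\<lambda>m. 1 + 24 / real m) \<longlonglongrightarrow> 1" by (rule lim_aux)
  qed
qed

end
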